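(* Let $c$ be a constant. For unknowns $\vec S_n(t),\bar{\vec S}_n(t)\in\mathbb{C}^m$ and $v_n(t)\in\mathbb{C}$ ($n\in\mathbb{Z}$), consider the discrete multicomponent Yajima--Oikawa system \begin{align*} \mathrm{i}\,\vec S_{n,t}&=v_n(\vec S_{n+1}+\vec S_{n-1})-c\,\vec S_n,\\ \mathrm{i}\,\bar{\vec S}_{n,t}&=-v_n(\bar{\vec S}_{n+1}+\bar{\vec S}_{n-1})+c\,\bar{\vec S}_n,\\ v_{n,t}&=\tfrac12 v_n\,\Delta_n^+\big(\langle\vec S_n,\bar{\vec S}_{n-1}\rangle+\langle\vec S_{n-1},\bar{\vec S}_n\rangle\big). \end{align*} Consider the linear problem for a scalar $\psi_n$ and column vectors $\vec\phi_n,\vec\chi_n\in\mathbb{C}^m$ with constant spectral parameter $\lambda$: \begin{align*} v_n(\psi_{n+1}+\psi_{n-1})&=\lambda\psi_n-\langle\vec S_n,\vec\phi_n\rangle-\langle\vec\chi_n,\bar{\vec S}_n\rangle,\\ \vec\phi_{n+1}-\vec\phi_n&=\tfrac{\mathrm{i}}{2}\bar{\vec S}_n(\psi_{n+1}+\psi_{n-1}),\\ \vec\chi_{n+1}+\vec\chi_n&=\tfrac{\mathrm{i}}{2}\vec S_n(\psi_{n+1}+\psi_{n-1}), \end{align*} together with the time evolution \begin{align*} \mathrm{i}\,\psi_{n,t}&=v_n(\psi_{n+1}+\psi_{n-1})-c\,\psi_n,\\ \vec\phi_{n,t}&=\tfrac12 v_n\bar{\vec S}_{n-1}(\psi_{n+1}+\psi_{n-1})-\tfrac12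 v_{n-1}\bar{\vec S}_n(\psi_n+\psi_{n-2}),\\ \vec\chi_{n,t}&=\tfrac12 v_n\vec S_{n-1}(\psi_{n+1}+\psi_{n-1})+\tfrac12 v_{n-1}\vec S_n(\psi_n+\psi_{n-2})+2\mathrm{i}c\,\vec\chi_n. \end{align*} Then the compatibility condition of these overdetermined linear equations (i.e., the requirement that the $t$-derivatives of the three spatial equations, computed using the time-evolution equations and the first spatial equation to eliminate the time derivatives and $\lambda$, hold identically for arbitrary values of $\psi_n,\vec\phi_n,\vec\chi_n$) is equivalent to the discrete multicomponent Yajima--Oikawa system above.
   Context: Here $n\in\mathbb{Z}$ is the lattice site and $t$ is time; subscript $t$ denotes $\partial/\partial t$. $\langle\vec a,\vec b\rangle=\sum_{i=1}^m a^{(i)}b^{(i)}$ is the standard bilinear scalar product (no complex conjugation). $\Delta_n^+$ is the forward difference operator, $\Delta_n^+f_n:=f_{n+1}-f_n$. The product of a scalar and a column vector is written in either order. $\bar{\vec S}_n$ is an independent vector variable (not necessarily related to the complex conjugate of $\vec S_n$). *)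

theory Defs
  imports "HOL-Analysis.Analysis"
begin

definition bil :: "complex^'m \<Rightarrow> complex^'m \<Rightarrow> complex" where
  "bil a b = (\<Sum>i\<in>UNIV. a$i * b$i)"

text \<open>The discrete multicomponent Yajima--Oikawa system at one instant:
  S, Sb, v are the fields at that instant, St, Sbt, vt their time derivatives.\<close>
definition dYO_system ::
  "complex \<Rightarrow> (int \<Rightarrow> complex^'m) \<Rightarrow> (int \<Rightarrow> complex^'m) \<Rightarrow> (int \<Rightarrow> complex)
   \<Rightarrow> (int \<Rightarrow> complex^'m) \<Rightarrow> (int \<Rightarrow> complex^'m) \<Rightarrow> (int \<Rightarrow> complex) \<Rightarrow> bool" where
  "dYO_system c S Sb v St Sbt vt \<longleftrightarrow>
     (\<forall>n. \<i> *s St n = v n *s (S (n+1) + S (n-1)) - c *s S n) \<and>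
     (\<forall>n. \<i> *s Sbt n = - (v n *s (Sb (n+1) + Sb (n-1))) + c *s Sb n) \<and>
     (\<forall>n. vt n = 1/2 * v n *
            ((bil (S (n+1)) (Sb n) + bil (S n) (Sb (n+1)))
             - (bil (S n) (Sb (n-1)) + bil (S (n-1)) (Sb n))))"

definition psi_t :: "complex \<Rightarrow> (int \<Rightarrow> complex) \<Rightarrow> (int \<Rightarrow> complex) \<Rightarrow> int \<Rightarrow> complex" where
  "psi_t c v ps k = - \<i> * (v k * (ps (k+1) + ps (k-1)) - c * ps k)"

definition phi_t :: "(int \<Rightarrow> complex^'m) \<Rightarrow> (int \<Rightarrow> complex) \<Rightarrow> (int \<Rightarrow> complex) \<Rightarrow> int \<Rightarrow> complex^'m" where
  "phi_t Sb v ps k =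
     (1/2 * v k * (ps (k+1) + ps (k-1))) *s Sb (k-1)
   - (1/2 * v (k-1) * (ps k + ps (k-2))) *s Sb k"

definition chi_t :: "complex \<Rightarrow> (int \<Rightarrow> complex^'m) \<Rightarrow> (int \<Rightarrow> complex) \<Rightarrow> (int \<Rightarrow> complex)
     \<Rightarrow> (int \<Rightarrow> complex^'m) \<Rightarrow> int \<Rightarrow> complex^'m" where
  "chi_t c S v ps ch k =
     (1/2 * v k * (ps (k+1) + ps (k-1))) *s S (k-1)
   + (1/2 * v (k-1) * (ps k + ps (k-2))) *s S k
   + (2 * \<i> * c) *s ch k"

text \<open>lambda * psi_k, eliminated via the first spatial equation.\<close>
definition lam_psi :: "(int \<Rightarrow> complex^'m) \<Rightarrow> (int \<Rightarrow> complex^'m) \<Rightarrow> (int \<Rightarrow> complex)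
     \<Rightarrow> (int \<Rightarrow> complex) \<Rightarrow> (int \<Rightarrow> complex^'m) \<Rightarrow> (int \<Rightarrow> complex^'m) \<Rightarrow> int \<Rightarrow> complex" where
  "lam_psi S Sb v ps ph ch k =
     v k * (ps (k+1) + ps (k-1)) + bil (S k) (ph k) + bil (ch k) (Sb k)"

text \<open>Compatibility condition at one instant: for arbitrary psi, phi, chi
  (related only by the second and third spatial equations, which merely express
  phi_{n+-1}, chi_{n+-1} through phi_n, chi_n and psi), the time derivatives of the
  three spatial equations hold identically, after replacing psi_t, phi_t, chi_t by
  the time evolution and lambda*psi_k by the first spatial equation.\<close>
definition dYO_compat ::
  "complex \<Rightarrow> (int \<Rightarrow> complex^'m) \<Rightarrow> (int \<Rightarrow> complex^'m) \<Rightarrow> (int \<Rightarrow> complex)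
   \<Rightarrow> (int \<Rightarrow> complex^'m) \<Rightarrow> (int \<Rightarrow> complex^'m) \<Rightarrow> (int \<Rightarrow> complex) \<Rightarrow> bool" where
  "dYO_compat c S Sb v St Sbt vt \<longleftrightarrow>
    (\<forall>(ps::int \<Rightarrow> complex) (ph::int \<Rightarrow> complex^'m) (ch::int \<Rightarrow> complex^'m).
      (\<forall>k. ph (k+1) - ph k = (\<i>/2 * (ps (k+1) + ps (k-1))) *s Sb k) \<and>
      (\<forall>k. ch (k+1) + ch k = (\<i>/2 * (ps (k+1) + ps (k-1))) *s S k) \<longrightarrow>
      (\<forall>n.
        vt n * (ps (n+1) + ps (n-1)) + v n * (psi_t c v ps (n+1) + psi_t c v ps (n-1))
          = - \<i> * (v n * (lam_psi S Sb v ps ph ch (n+1) + lam_psi S Sb v ps ph ch (n-1))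
                   - c * lam_psi S Sb v ps ph ch n)
            - bil (St n) (ph n) - bil (S n) (phi_t Sb v ps n)
            - bil (chi_t c S v ps ch n) (Sb n) - bil (ch n) (Sbt n)
        \<and>
        phi_t Sb v ps (n+1) - phi_t Sb v ps n
          = (\<i>/2 * (ps (n+1) + ps (n-1))) *s Sbt n
            + (\<i>/2 * (psi_t c v ps (n+1) + psi_t c v ps (n-1))) *s Sb n
        \<and>
        chi_t c S v ps ch (n+1) + chi_t c S v ps ch n
          = (\<i>/2 * (ps (n+1) + ps (n-1))) *s St n
            + (\<i>/2 * (psi_t c v ps (n+1) + psi_t c v ps (n-1))) *s S n))"

end

theory Submission
  imports Defs
begin

lemma bil_simps:
  "bil (a+b) d = bil a d + bil b d"
  "bil a (b+d) = bil a b + bil a d"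
  "bil (a-b) d = bil a d - bil b d"
  "bil a (b-d) = bil a b - bil a d"
  "bil (-a) d = - bil a d"
  "bil a (-d) = - bil a d"
  "bil (x *s a) d = x * bil a d"
  "bil a (x *s d) = x * bil a d"
  "bil 0 d = 0" "bil a 0 = 0"
  by (simp_all add: bil_def sum.distrib sum_subtractf sum_negf sum_distrib_left algebra_simps)

lemma bil_axis: "bil a (axis j 1) = a $ j" "bil (axis j 1) a = a $ j"
  by (simp_all add: bil_def axis_def if_distrib[of "times _"] if_distrib[of "\<lambda>x. x * _"] cong: if_cong)

lemma eq1_red:
  fixes S Sb ph ch St Sbt :: "int \<Rightarrow> complex^'m" and v vt ps :: "int \<Rightarrow> complex"
  assumes hSt: "St n = (-\<i>) *s (v n *s (S (n+1) + S (n-1)) - c *s S n)"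
  and hSbt: "Sbt n = (-\<i>) *s (- (v n *s (Sb (n+1) + Sb (n-1))) + c *s Sb n)"
  and p1: "ph (n+1) = ph n + (\<i>/2 * (ps (n+1) + ps (n-1))) *s Sb n"
  and p0: "ph (n-1) = ph n - (\<i>/2 * (ps n + ps (n-2))) *s Sb (n-1)"
  and c1: "ch (n+1) = - ch n + (\<i>/2*(ps(n+1)+ps(n-1))) *s S n"
  and c0: "ch (n-1) = - ch n + (\<i>/2*(ps n + ps(n-2))) *s S (n-1)"
  shows "(vt n * (ps (n+1) + ps (n-1)) + v n * (psi_t c v ps (n+1) + psi_t c v ps (n-1)))
      - (- \<i> * (v n * (lam_psi S Sb v ps ph ch (n+1) + lam_psi S Sb v ps ph ch (n-1))
                   - c * lam_psi S Sb v ps ph ch n)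
            - bil (St n) (ph n) - bil (S n) (phi_t Sb v ps n)
            - bil (chi_t c S v ps ch n) (Sb n) - bil (ch n) (Sbt n))
     = (ps(n+1)+ps(n-1)) * (vt n - 1/2 * v n * ((bil (S (n+1)) (Sb n) + bil (S n) (Sb (n+1)))
             - (bil (S n) (Sb (n-1)) + bil (S (n-1)) (Sb n))))"
proof -
  have e: "n-1+1 = n" "n+1-1=n" "n-1-1 = n-2" "n+1+1 = n+2" by simp_all
  have ii: "\<i>*\<i> = -1" by simp
  show ?thesis
    unfolding psi_t_def phi_t_def chi_t_def lam_psi_def e
    unfolding hSt hSbt p1 p0 c1 c0 bil_simps
    by (simp add: field_simps)
qed

lemma ex_diff:
  fixes a :: "int \<Rightarrow> 'a::ab_group_add"
  shows "\<exists>f. \<forall>k. f (k+1) - f k = a k"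
proof -
  define f where "f k = (if 0 \<le> k then sum a {0..<k} else - sum a {k..<0})" for k
  have "f (k+1) - f k = a k" for k
  proof (cases "0 \<le> k")
    case True
    have "{0..<k+1} = insert k {0..<k}" using True by auto
    then show ?thesis using True by (simp add: f_def)
  next
    case False
    show ?thesis
    proof (cases "k = -1")
      case True
      have "{-1..<0::int} = {-1}" by auto
      then show ?thesis using True by (simp add: f_def)
    next
      case F2: False
      have "{k..<0} = insert k {k+1..<0}" using False by auto
      then show ?thesis using False F2 by (simp add: f_def)
    qed
  qed
  then show ?thesis by blast
qed

definition sg :: "int \<Rightarrow> complex" where "sg k = (if even k then 1 else -1)"

lemma sg_simps: "sg (k+1) = - sg k" "sg (k-1) = - sg k" "sg k * sg k = 1" "sg k \<noteq> 0"
  by (auto simp: sg_def)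

lemma ex_sum:
  fixes b :: "int \<Rightarrow> complex^'m"
  shows "\<exists>g. \<forall>k. g (k+1) + g k = b k"
proof -
  obtain f where f: "\<And>k. f (k+1) - f k = sg (k+1) *s b k"
    using ex_diff[of "\<lambda>k. sg (k+1) *s b k"] by blast
  have "sg (k+1) *s f (k+1) + sg k *s f k = b k" for k
  proof -
    have "sg (k+1) *s f (k+1) + sg k *s f k = sg (k+1) *s (f (k+1) - f k)"
      by (simp add: sg_def vec_eq_iff algebra_simps)
    also have "\<dots> = b k" unfolding f
      by (simp add: vec_eq_iff sg_def)
    finally show ?thesis .
  qed
  then show ?thesis by (intro exI[of _ "\<lambda>k. sg k *s f k"]) blast
qed

lemma eq2_fwd:
  fixes S Sb Sbt :: "int \<Rightarrow> complex^'m" and v ps :: "int \<Rightarrow> complex"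
  assumes h: "\<i> *s Sbt n = - (v n *s (Sb (n+1) + Sb (n-1))) + c *s Sb n"
  shows "phi_t Sb v ps (n+1) - phi_t Sb v ps n
          = (\<i>/2 * (ps (n+1) + ps (n-1))) *s Sbt n
            + (\<i>/2 * (psi_t c v ps (n+1) + psi_t c v ps (n-1))) *s Sb n"
proof -
  have e: "n-1+1 = n" "n+1-1=n" "n-1-1 = n-2" "n+1+1 = n+2" by simp_all
  have "Sbt n $ j = - \<i> * (- (v n * (Sb (n+1) $ j + Sb (n-1) $ j)) + c * Sb n $ j)" for j
  proof -
    have "\<i> * Sbt n $ j = - (v n * (Sb (n+1) $ j + Sb (n-1) $ j)) + c * Sb n $ j"
      using arg_cong[OF h, of "\<lambda>x. x $ j"] by (simp add: algebra_simps)
    then have "-\<i> * (\<i> * Sbt n $ j) = - \<i> * (- (v n * (Sb (n+1) $ j + Sb (n-1) $ j)) + c * Sb n $ j)"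
      by simp
    then show ?thesis by (simp add: algebra_simps)
  qed
  then have sb: "Sbt n = (- \<i>) *s (- (v n *s (Sb (n+1) + Sb (n-1))) + c *s Sb n)"
    by (simp add: vec_eq_iff algebra_simps)
  show ?thesis
    unfolding psi_t_def phi_t_def e sb
    by (simp add: vec_eq_iff field_simps)
qed

lemma eq3_fwd:
  fixes S Sb St ch :: "int \<Rightarrow> complex^'m" and v ps :: "int \<Rightarrow> complex"
  assumes h: "\<i> *s St n = v n *s (S (n+1) + S (n-1)) - c *s S n"
   and c1: "ch (n+1) + ch n = (\<i>/2 * (ps (n+1) + ps (n-1))) *s S n"
  shows "chi_t c S v ps ch (n+1) + chi_t c S v ps ch n
          = (\<i>/2 * (ps (n+1) + ps (n-1))) *s St n
            + (\<i>/2 * (psi_t c v ps (n+1) + psi_t c v ps (n-1))) *s S n"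
proof -
  have e: "n-1+1 = n" "n+1-1=n" "n-1-1 = n-2" "n+1+1 = n+2" by simp_all
  have st: "St n $ j = - \<i> * (v n * (S (n+1) $ j + S (n-1) $ j) - c * S n $ j)" for j
  proof -
    have "\<i> * St n $ j = v n * (S (n+1) $ j + S (n-1) $ j) - c * S n $ j"
      using arg_cong[OF h, of "\<lambda>x. x $ j"] by (simp add: algebra_simps)
    then have "-\<i> * (\<i> * St n $ j) = - \<i> * (v n * (S (n+1) $ j + S (n-1) $ j) - c * S n $ j)"
      by simp
    then show ?thesis by (simp add: algebra_simps)
  qed
  have cc: "ch (n+1) $ j = - ch n $ j + (\<i>/2 * (ps (n+1) + ps (n-1))) * S n $ j" for j
    using arg_cong[OF c1, of "\<lambda>x. x $ j"] by (simp add: algebra_simps)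
  have st2: "St n = (- \<i>) *s (v n *s (S (n+1) + S (n-1)) - c *s S n)"
    using st by (simp add: vec_eq_iff algebra_simps)
  have cc2: "ch (n+1) = - ch n + (\<i>/2 * (ps (n+1) + ps (n-1))) *s S n"
    using cc by (simp add: vec_eq_iff)
  show ?thesis
    unfolding chi_t_def psi_t_def e st2 cc2
    by (simp add: vec_eq_iff field_simps)
qed

lemma solve_i: assumes "\<i> *s (x::complex^'m) = y" shows "x = (-\<i>) *s y"
proof (rule vec_eq_iff[THEN iffD2], intro allI)
  fix i
  have "\<i> * x$i = y$i" using arg_cong[OF assms, of "\<lambda>z. z$i"] by simp
  then have "-\<i>*(\<i>*x$i) = -\<i>*y$i" by simp
  then show "x$i = ((-\<i>) *s y)$i" by simp
qed

lemma recs: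
  fixes ph ch S Sb :: "int \<Rightarrow> complex^'m" and ps :: "int \<Rightarrow> complex"
  assumes rp: "\<forall>k. ph (k+1) - ph k = (\<i>/2 * (ps (k+1) + ps (k-1))) *s Sb k"
    and rc: "\<forall>k. ch (k+1) + ch k = (\<i>/2 * (ps (k+1) + ps (k-1))) *s S k"
  shows "ph (n+1) = ph n + (\<i>/2 * (ps (n+1) + ps (n-1))) *s Sb n"
  and "ph (n-1) = ph n - (\<i>/2 * (ps n + ps (n-2))) *s Sb (n-1)"
  and "ch (n+1) = - ch n + (\<i>/2*(ps(n+1)+ps(n-1))) *s S n"
  and "ch (n-1) = - ch n + (\<i>/2*(ps n + ps(n-2))) *s S (n-1)"
proof -
  have e: "n-1+1 = n" "n-1-1 = n-2" by simp_all
  have a: "ph (n+1) - ph n = (\<i>/2 * (ps (n+1) + ps (n-1))) *s Sb n" using rp by blast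
  have b: "ph n - ph (n-1) = (\<i>/2 * (ps n + ps (n-2))) *s Sb (n-1)" using rp[rule_format, of "n-1"] unfolding e .
  have c: "ch (n+1) + ch n = (\<i>/2 * (ps (n+1) + ps (n-1))) *s S n" using rc by blast
  have d: "ch n + ch (n-1) = (\<i>/2 * (ps n + ps (n-2))) *s S (n-1)" using rc[rule_format, of "n-1"] unfolding e .
  show "ph (n+1) = ph n + (\<i>/2 * (ps (n+1) + ps (n-1))) *s Sb n" using a by (simp add: algebra_simps)
  show "ph (n-1) = ph n - (\<i>/2 * (ps n + ps (n-2))) *s Sb (n-1)" using b by (simp add: algebra_simps)
  show "ch (n+1) = - ch n + (\<i>/2*(ps(n+1)+ps(n-1))) *s S n" using c by (simp add: algebra_simps)
  show "ch (n-1) = - ch n + (\<i>/2*(ps n + ps(n-2))) *s S (n-1)" using d by (simp add: algebra_simps)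
qed

lemma main:
  fixes S Sb St Sbt :: "int \<Rightarrow> complex^'m" and v vt :: "int \<Rightarrow> complex"
  shows "dYO_compat c S Sb v St Sbt vt \<longleftrightarrow> dYO_system c S Sb v St Sbt vt"
proof
  assume sys: "dYO_system c S Sb v St Sbt vt"
  have s1: "\<And>n. \<i> *s St n = v n *s (S (n+1) + S (n-1)) - c *s S n"
   and s2: "\<And>n. \<i> *s Sbt n = - (v n *s (Sb (n+1) + Sb (n-1))) + c *s Sb n"
   and s3: "\<And>n. vt n = 1/2 * v n *
            ((bil (S (n+1)) (Sb n) + bil (S n) (Sb (n+1)))
             - (bil (S n) (Sb (n-1)) + bil (S (n-1)) (Sb n)))"
    using sys unfolding dYO_system_def by blast+
  show "dYO_compat c S Sb v St Sbt vt"
    unfolding dYO_compat_def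
  proof (intro allI impI)
    fix ps :: "int \<Rightarrow> complex" and ph ch :: "int \<Rightarrow> complex^'m" and n :: int
    assume "(\<forall>k. ph (k+1) - ph k = (\<i>/2 * (ps (k+1) + ps (k-1))) *s Sb k) \<and>
      (\<forall>k. ch (k+1) + ch k = (\<i>/2 * (ps (k+1) + ps (k-1))) *s S k)"
    then have rp: "\<forall>k. ph (k+1) - ph k = (\<i>/2 * (ps (k+1) + ps (k-1))) *s Sb k"
      and rc: "\<forall>k. ch (k+1) + ch k = (\<i>/2 * (ps (k+1) + ps (k-1))) *s S k" by blast+
    note r = recs[OF rp rc, of n]
    note red = eq1_red[where St=St and Sbt=Sbt and S=S and Sb=Sb and ph=ph and ch=ch and ps=ps and v=v and c=c and n=n and vt=vt, OF solve_i[OF s1[of n]] solve_i[OF s2[of n]] r]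
    have "(vt n - 1/2 * v n * ((bil (S (n+1)) (Sb n) + bil (S n) (Sb (n+1)))
             - (bil (S n) (Sb (n-1)) + bil (S (n-1)) (Sb n)))) = 0"
      using s3[of n] by simp
    note E1 = red[unfolded this mult_zero_right right_minus_eq]
    show "vt n * (ps (n+1) + ps (n-1)) + v n * (psi_t c v ps (n+1) + psi_t c v ps (n-1))
          = - \<i> * (v n * (lam_psi S Sb v ps ph ch (n+1) + lam_psi S Sb v ps ph ch (n-1))
                   - c * lam_psi S Sb v ps ph ch n)
            - bil (St n) (ph n) - bil (S n) (phi_t Sb v ps n)
            - bil (chi_t c S v ps ch n) (Sb n) - bil (ch n) (Sbt n)
        \<and>
        phi_t Sb v ps (n+1) - phi_t Sb v ps n
          = (\<i>/2 * (ps (n+1) + ps (n-1))) *s Sbt n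
            + (\<i>/2 * (psi_t c v ps (n+1) + psi_t c v ps (n-1))) *s Sb n
        \<and>
        chi_t c S v ps ch (n+1) + chi_t c S v ps ch n
          = (\<i>/2 * (ps (n+1) + ps (n-1))) *s St n
            + (\<i>/2 * (psi_t c v ps (n+1) + psi_t c v ps (n-1))) *s S n"
      using E1 eq2_fwd[where Sbt=Sbt and Sb=Sb and v=v and c=c and n=n and ps=ps, OF s2[of n]] eq3_fwd[where St=St and S=S and v=v and c=c and n=n and ps=ps and ch=ch, OF s1[of n]] rc by blast
  qed
next
  assume C: "dYO_compat c S Sb v St Sbt vt"
  have C1: "vt n * (ps (n+1) + ps (n-1)) + v n * (psi_t c v ps (n+1) + psi_t c v ps (n-1))
          = - \<i> * (v n * (lam_psi S Sb v ps ph ch (n+1) + lam_psi S Sb v ps ph ch (n-1))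
                   - c * lam_psi S Sb v ps ph ch n)
            - bil (St n) (ph n) - bil (S n) (phi_t Sb v ps n)
            - bil (chi_t c S v ps ch n) (Sb n) - bil (ch n) (Sbt n)"
    if "\<forall>k. ph (k+1) - ph k = (\<i>/2 * (ps (k+1) + ps (k-1))) *s Sb k"
      "\<forall>k. ch (k+1) + ch k = (\<i>/2 * (ps (k+1) + ps (k-1))) *s S k" for ps ph ch n
    using C that unfolding dYO_compat_def by blast
  have S1: "\<i> *s St n = v n *s (S (n+1) + S (n-1)) - c *s S n" for n
  proof -
    have "\<i> * St n $ j = v n * (S (n+1) $ j + S (n-1) $ j) - c * S n $ j" for j
    proof -
      have h: "0 = - \<i> * (v n * (S (n+1) $ j + S (n-1) $ j) - c * S n $ j) - St n $ j"
        using C1[of "\<lambda>_. axis j 1" "\<lambda>_. 0" "\<lambda>_. 0" n]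
        by (simp add: psi_t_def phi_t_def chi_t_def lam_psi_def bil_simps bil_axis)
      then have "St n $ j = - \<i> * (v n * (S (n+1) $ j + S (n-1) $ j) - c * S n $ j)"
        by (simp add: algebra_simps)
      then have "\<i> * St n $ j = \<i> * (- \<i> * (v n * (S (n+1) $ j + S (n-1) $ j) - c * S n $ j))"
        by simp
      then show ?thesis by simp
    qed
    then show ?thesis by (simp add: vec_eq_iff algebra_simps)
  qed
  have S2: "\<i> *s Sbt n = - (v n *s (Sb (n+1) + Sb (n-1))) + c *s Sb n" for n
  proof -
    have "\<i> * Sbt n $ j = - (v n * (Sb (n+1) $ j + Sb (n-1) $ j)) + c * Sb n $ j" for j
    proof -
      have "\<forall>k. sg (k+1) *s axis j 1 + sg k *s axis j 1 = (0::complex^'m)"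
        by (simp add: sg_simps)
      then have h: "0 = - \<i> * (v n * (- sg n * Sb (n+1) $ j + - sg n * Sb (n-1) $ j) - c * (sg n * Sb n $ j))
          - (2 * \<i> * c) * (sg n * Sb n $ j) - sg n * Sbt n $ j"
        using C1[of "\<lambda>_. 0" "\<lambda>_. 0" "\<lambda>k. sg k *s axis j 1" n]
        by (simp add: psi_t_def phi_t_def chi_t_def lam_psi_def bil_simps bil_axis sg_simps mult.assoc)
      then have "sg n * (Sbt n $ j - (\<i> * (v n * (Sb (n+1) $ j + Sb (n-1) $ j)) - \<i> * c * Sb n $ j)) = 0"
        by (simp add: algebra_simps)
      then have "Sbt n $ j = \<i> * (v n * (Sb (n+1) $ j + Sb (n-1) $ j)) - \<i> * c * Sb n $ j"
        using sg_simps(4)[of n] by simp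
      then have "\<i> * Sbt n $ j = \<i> * (\<i> * (v n * (Sb (n+1) $ j + Sb (n-1) $ j)) - \<i> * c * Sb n $ j)"
        by simp
      then show ?thesis by (simp add: algebra_simps)
    qed
    then show ?thesis by (simp add: vec_eq_iff algebra_simps)
  qed
  have S3: "vt n = 1/2 * v n *
            ((bil (S (n+1)) (Sb n) + bil (S n) (Sb (n+1)))
             - (bil (S n) (Sb (n-1)) + bil (S (n-1)) (Sb n)))" for n
  proof -
    define ps where "ps k = (if k = n+1 then 1 else (0::complex))" for k
    obtain ph where rp: "\<forall>k. ph (k+1) - ph k = (\<i>/2 * (ps (k+1) + ps (k-1))) *s Sb k"
      using ex_diff[of "\<lambda>k. (\<i>/2 * (ps (k+1) + ps (k-1))) *s Sb k"] by blast
    obtain ch where rc: "\<forall>k. ch (k+1) + ch k = (\<i>/2 * (ps (k+1) + ps (k-1))) *s S k"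
      using ex_sum[of "\<lambda>k. (\<i>/2 * (ps (k+1) + ps (k-1))) *s S k"] by blast
    note red = eq1_red[where St=St and Sbt=Sbt and S=S and Sb=Sb and ph=ph and ch=ch and ps=ps and v=v and c=c and n=n and vt=vt, OF solve_i[OF S1[of n]] solve_i[OF S2[of n]] recs[OF rp rc, of n]]
    have P: "ps (n+1) + ps (n-1) = 1" by (simp add: ps_def)
    note E = C1[OF rp rc, of n, unfolded P]
    note R = red[unfolded P mult_1_left]
    have "vt n - 1/2 * v n *
            ((bil (S (n+1)) (Sb n) + bil (S n) (Sb (n+1)))
             - (bil (S n) (Sb (n-1)) + bil (S (n-1)) (Sb n))) = 0"
      by (subst R[symmetric]) (simp only: E diff_self)
    then show ?thesis by simp
  qed
  show "dYO_system c S Sb v St Sbt vt"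
    unfolding dYO_system_def using S1 S2 S3 by blast
qed


theorem proposition2p1:
  fixes c :: complex
    and S Sb :: "real \<Rightarrow> int \<Rightarrow> complex^'m"
    and v :: "real \<Rightarrow> int \<Rightarrow> complex"
    and St Sbt :: "real \<Rightarrow> int \<Rightarrow> complex^'m"
    and vt :: "real \<Rightarrow> int \<Rightarrow> complex"
    and t :: real
  assumes "\<And>n. ((\<lambda>s. S s n) has_vector_derivative St t n) (at t)"
    and "\<And>n. ((\<lambda>s. Sb s n) has_vector_derivative Sbt t n) (at t)"
    and "\<And>n. ((\<lambda>s. v s n) has_vector_derivative vt t n) (at t)"
  shows "dYO_compat c (S t) (Sb t) (v t) (St t) (Sbt t) (vt t)
     \<longleftrightarrow> dYO_system c (S t) (Sb t) (v t) (St t) (Sbt t) (vt t)"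
  by (rule main)

end
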